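(* Let $p$ (true dynamics) and $\hat p$ (learned model) be dynamics kernels, $\pi_D$ and $\pi$ policies, and $k\ge 0$ an integer. Suppose $$\sup_{t\ge 0}\ \mathbb E_{s\sim d_t^{\pi_D},\,a\sim \pi_D(\cdot\mid s)}\Big[D_{TV}\big(p(\cdot\mid s,a),\hat p(\cdot\mid s,a)\big)\Big]\le \epsilon_m \qquad\text{and}\qquad \sup_{s\in\mathcal S} D_{TV}\big(\pi_D(\cdot\mid s),\pi(\cdot\mid s)\big)\le\epsilon_\pi .$$ Let $\eta[\pi]=\eta(\pi,p)$ and $\eta^{\mathrm{branch}}[\pi]=\eta_k(\pi_D,p;\pi,\hat p)$. Then $$\eta[\pi]\ \ge\ \eta^{\mathrm{branch}}[\pi]-2r_{\max}\left[\frac{\gamma^{k+1}\epsilon_\pi}{(1-\gamma)^2}+\frac{(\gamma^k+2)\,\epsilon_\pi}{1-\gamma}+\frac{k}{1-\gamma}(\epsilon_m+2\epsilon_\pi)\right].$$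
   Context: Let $\mathcal S$ and $\mathcal A$ be countable (e.g. finite) state and action spaces, $\rho_0$ a probability distribution on $\mathcal S$ (initial state distribution), $\gamma\in(0,1)$ a discount factor, and $r:\mathcal S\times\mathcal A\to\mathbb R$ a reward function with $|r(s,a)|\le r_{\max}$ for all $(s,a)$. A policy is a Markov kernel $\pi(a\mid s)$ from $\mathcal S$ to $\mathcal A$; a dynamics kernel is a Markov kernel $q(s'\mid s,a)$ from $\mathcal S\times\mathcal A$ to $\mathcal S$. For a policy $\pi$ and dynamics $q$, the return is $\eta(\pi,q)=\sum_{t\ge0}\gamma^t\,\mathbb E[r(s_t,a_t)]$, where $s_0\sim\rho_0$, $a_t\sim\pi(\cdot\mid s_t)$, $s_{t+1}\sim q(\cdot\mid s_t,a_t)$. For probability distributions $\mu,\nu$ on a countable set, $D_{TV}(\mu,\nu)=\frac12\sum_x|\mu(x)-\nu(x)|$. Here $d_t^{\pi_D}$ denotes the distribution of $s_t$ when $s_0\sim\rho_0$, $a_i\sim\pi_D(\cdot\mid s_i)$, $s_{i+1}\sim p(\cdot\mid s_i,a_i)$. Branched return: given a "pre-branch" pair (policy $\pi^{\mathrm{pre}}$, dynamics $q^{\mathrm{pre}}$), a "post-branch" pair (policy $\pi^{\mathrm{post}}$, dynamics $q^{\mathrm{post}}$) and an integer $k\ge0$, for each $t\ge0$ let $m_t=\max(t-k,0)$ and generate $s_0\sim\rho_0$; for $0\le i<m_t$: $a_i\sim\pi^{\mathrm{pre}}(\cdot\mid s_i)$, $s_{i+1}\sim q^{\mathrm{pre}}(\cdot\mid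 s_i,a_i)$; for $m_t\le i<t$: $a_i\sim\pi^{\mathrm{post}}(\cdot\mid s_i)$, $s_{i+1}\sim q^{\mathrm{post}}(\cdot\mid s_i,a_i)$; finally $a_t\sim\pi^{\mathrm{post}}(\cdot\mid s_t)$. Let $d_t$ be the law of $(s_t,a_t)$ so produced. The $k$-branched return is $\eta_k(\pi^{\mathrm{pre}},q^{\mathrm{pre}};\pi^{\mathrm{post}},q^{\mathrm{post}})=\sum_{t\ge0}\gamma^t\,\mathbb E_{(s,a)\sim d_t}[r(s,a)]$. (Thus the state at time $t$ is obtained by following the pre-branch pair up to time $t-k$ and then the post-branch pair for the remaining at most $k$ steps; note $\eta_k(\pi,q;\pi,q)=\eta(\pi,q)$.) *)

theory Defs
  imports "HOL-Probability.Probability"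
begin

definition tv_dist :: "'x pmf \<Rightarrow> 'x pmf \<Rightarrow> real" where
  "tv_dist \<mu> \<nu> = (1/2) * infsum (\<lambda>x. \<bar>pmf \<mu> x - pmf \<nu> x\<bar>) UNIV"

definition step_dist :: "('s \<Rightarrow> 'a pmf) \<Rightarrow> ('s \<Rightarrow> 'a \<Rightarrow> 's pmf) \<Rightarrow> 's pmf \<Rightarrow> 's pmf" where
  "step_dist \<pi> q \<mu> = bind_pmf \<mu> (\<lambda>s. bind_pmf (\<pi> s) (\<lambda>a. q s a))"

definition state_dist :: "'s pmf \<Rightarrow> ('s \<Rightarrow> 'a pmf) \<Rightarrow> ('s \<Rightarrow> 'a \<Rightarrow> 's pmf) \<Rightarrow> nat \<Rightarrow> 's pmf" where
  "state_dist \<rho>0 \<pi> q t = (step_dist \<pi> q ^^ t) \<rho>0"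

definition sa_dist :: "('s \<Rightarrow> 'a pmf) \<Rightarrow> 's pmf \<Rightarrow> ('s \<times> 'a) pmf" where
  "sa_dist \<pi> \<mu> = bind_pmf \<mu> (\<lambda>s. map_pmf (\<lambda>a. (s, a)) (\<pi> s))"

definition ret :: "'s pmf \<Rightarrow> real \<Rightarrow> ('s \<Rightarrow> 'a \<Rightarrow> real) \<Rightarrow> ('s \<Rightarrow> 'a pmf) \<Rightarrow> ('s \<Rightarrow> 'a \<Rightarrow> 's pmf) \<Rightarrow> real" where
  "ret \<rho>0 \<gamma> r \<pi> q = (\<Sum>t. \<gamma> ^ t *
     measure_pmf.expectation (sa_dist \<pi> (state_dist \<rho>0 \<pi> q t)) (\<lambda>(s, a). r s a))"

text \<open>Branched state distribution at time t: follow (pre) for m_t = max(t-k,0) = t - k (nat)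
  steps, then (post) for the remaining t - m_t steps.\<close>
definition branch_state_dist ::
  "'s pmf \<Rightarrow> nat \<Rightarrow> ('s \<Rightarrow> 'a pmf) \<Rightarrow> ('s \<Rightarrow> 'a \<Rightarrow> 's pmf) \<Rightarrow> ('s \<Rightarrow> 'a pmf) \<Rightarrow> ('s \<Rightarrow> 'a \<Rightarrow> 's pmf) \<Rightarrow> nat \<Rightarrow> 's pmf" where
  "branch_state_dist \<rho>0 k \<pi>pre qpre \<pi>post qpost t =
     (let m = t - k in (step_dist \<pi>post qpost ^^ (t - m)) (state_dist \<rho>0 \<pi>pre qpre m))"

definition branched_ret ::
  "'s pmf \<Rightarrow> real \<Rightarrow> ('s \<Rightarrow> 'a \<Rightarrow> real) \<Rightarrow> nat \<Rightarrow> ('s \<Rightarrow> 'a pmf) \<Rightarrow> ('s \<Rightarrow> 'a \<Rightarrow> 's pmf) \<Rightarrow> ('s \<Rightarrow> 'a pmf) \<Rightarrow> ('s \<Rightarrow> 'a \<Rightarrow> 's pmf) \<Rightarrow> real" where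
  "branched_ret \<rho>0 \<gamma> r k \<pi>pre qpre \<pi>post qpost = (\<Sum>t. \<gamma> ^ t *
     measure_pmf.expectation (sa_dist \<pi>post (branch_state_dist \<rho>0 k \<pi>pre qpre \<pi>post qpost t))
       (\<lambda>(s, a). r s a))"

end

theory Submission imports Defs begin

definition L1 :: "'x pmf \<Rightarrow> 'x pmf \<Rightarrow> ennreal" where
  "L1 \<mu> \<nu> = (\<integral>\<^sup>+ x. ennreal \<bar>pmf \<mu> x - pmf \<nu> x\<bar> \<partial>count_space UNIV)"

lemma L1_le2: "L1 \<mu> \<nu> \<le> 2"
proof -
  have "L1 \<mu> \<nu> \<le> (\<integral>\<^sup>+ x. ennreal (pmf \<mu> x) + ennreal (pmf \<nu> x) \<partial>count_space UNIV)"
    unfolding L1_def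
    by (intro nn_integral_mono) (smt (verit) ennreal_leI ennreal_plus pmf_nonneg)
  also have "\<dots> = 2"
    by (subst nn_integral_add) (auto simp: nn_integral_pmf measure_pmf.emeasure_space_1[simplified] one_add_one)
  finally show ?thesis .
qed

lemma L1_fin: "L1 \<mu> \<nu> \<noteq> \<infinity>"
  using L1_le2[of \<mu> \<nu>] by (auto simp: top_unique)

lemma L1_sym: "L1 \<mu> \<nu> = L1 \<nu> \<mu>"
  unfolding L1_def by (simp add: abs_minus_commute)

lemma L1_tri: "L1 \<mu> \<rho> \<le> L1 \<mu> \<nu> + L1 \<nu> \<rho>"
  unfolding L1_def
  by (subst nn_integral_add[symmetric]) (auto intro!: nn_integral_mono simp: ennreal_plus[symmetric] simp del: ennreal_plus)

lemma tv_L1: "tv_dist (\<mu>::'x::countable pmf) \<nu> = enn2real (L1 \<mu> \<nu>) / 2"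
proof -
  let ?f = "\<lambda>x. \<bar>pmf \<mu> x - pmf \<nu> x\<bar>"
  have nn: "nn_integral (count_space UNIV) ?f \<noteq> \<infinity>"
    using L1_fin[of \<mu> \<nu>] unfolding L1_def by simp
  have e1: "infsetsum ?f UNIV = enn2real (L1 \<mu> \<nu>)"
    using infsetsum_conv_nn_integral[OF nn] unfolding L1_def by simp
  have "integrable (count_space UNIV) ?f"
    using nn by (intro integrableI_nonneg) (auto simp: less_top)
  then have "infsetsum ?f UNIV = infsum ?f UNIV" by (rule infsetsum_infsum[unfolded Infinite_Set_Sum.abs_summable_on_def])
  then show ?thesis unfolding tv_dist_def using e1 by simp
qed


lemma swap_count:
  fixes g :: "'a::countable \<Rightarrow> 'b::countable \<Rightarrow> ennreal"
  shows "(\<integral>\<^sup>+y. \<integral>\<^sup>+x. g x y \<partial>count_space UNIV \<partial>count_space UNIV)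
       = (\<integral>\<^sup>+x. \<integral>\<^sup>+y. g x y \<partial>count_space UNIV \<partial>count_space UNIV)"
proof -
  interpret pair_sigma_finite "count_space (UNIV::'a set)" "count_space (UNIV::'b set)"
    by (intro pair_sigma_finite.intro sigma_finite_measure_count_space_countable) auto
  show ?thesis
    by (rule Fubini') (simp add: pair_measure_countable)
qed

lemma swap_pmf:
  fixes g :: "'a::countable \<Rightarrow> 'b::countable \<Rightarrow> ennreal"
  shows "(\<integral>\<^sup>+y. \<integral>\<^sup>+x. g x y \<partial>measure_pmf \<mu> \<partial>count_space UNIV)
       = (\<integral>\<^sup>+x. \<integral>\<^sup>+y. g x y \<partial>count_space UNIV \<partial>measure_pmf \<mu>)"
  unfolding nn_integral_measure_pmf
  by (subst swap_count) (simp add: nn_integral_cmult)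

lemma pmf_bind_count:
  fixes \<mu> :: "'a::countable pmf"
  shows "pmf (bind_pmf \<mu> K) y = (\<integral>x. pmf \<mu> x * pmf (K x) y \<partial>count_space UNIV)"
  unfolding pmf_bind by (simp add: measure_pmf_eq_density integral_density)

lemma integrable_pmf_mult:
  fixes \<mu> :: "'a::countable pmf"
  assumes "\<And>x. \<bar>f x\<bar> \<le> B"
  shows "integrable (count_space UNIV) (\<lambda>x. pmf \<mu> x * f x)"
proof (rule Bochner_Integration.integrable_bound)
  show "integrable (count_space UNIV) (\<lambda>x. pmf \<mu> x * B)"
    using integrable_pmf[of UNIV \<mu>] by simp
  show "AE x in count_space UNIV. norm (pmf \<mu> x * f x) \<le> norm (pmf \<mu> x * B)"
    using assms by (auto simp: abs_mult pmf_nonneg intro!: mult_left_mono order.trans[OF _ abs_ge_self])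
qed auto

lemma integral_pmf_count:
  fixes \<mu> :: "'a::countable pmf"
  shows "measure_pmf.expectation \<mu> f = (\<integral>x. pmf \<mu> x * f x \<partial>count_space UNIV)"
  by (simp add: measure_pmf_eq_density integral_density)

lemma L1_expect:
  fixes \<mu> \<nu> :: "'a::countable pmf"
  assumes "\<And>x. \<bar>f x\<bar> \<le> B"
  shows "\<bar>measure_pmf.expectation \<mu> f - measure_pmf.expectation \<nu> f\<bar> \<le> B * enn2real (L1 \<mu> \<nu>)"
proof -
  have B0: "B \<ge> 0" using assms[of undefined] by linarith
  have i1: "integrable (count_space UNIV) (\<lambda>x. pmf \<mu> x * f x)"
    and i2: "integrable (count_space UNIV) (\<lambda>x. pmf \<nu> x * f x)"
    using assms by (auto intro: integrable_pmf_mult)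
  have id: "integrable (count_space UNIV) (\<lambda>x. \<bar>pmf \<mu> x - pmf \<nu> x\<bar>)"
    using L1_fin[of \<mu> \<nu>] unfolding L1_def by (intro integrableI_nonneg) (auto simp: less_top)
  have "measure_pmf.expectation \<mu> f - measure_pmf.expectation \<nu> f
     = (\<integral>x. (pmf \<mu> x - pmf \<nu> x) * f x \<partial>count_space UNIV)"
    unfolding integral_pmf_count
    by (subst Bochner_Integration.integral_diff[OF i1 i2, symmetric]) (simp add: left_diff_distrib)
  also have "\<bar>\<dots>\<bar> \<le> (\<integral>x. \<bar>pmf \<mu> x - pmf \<nu> x\<bar> * B \<partial>count_space UNIV)"
  proof -
    have ih: "integrable (count_space UNIV) (\<lambda>x. (pmf \<mu> x - pmf \<nu> x) * f x)"
      using Bochner_Integration.integrable_diff[OF i1 i2] by (simp add: left_diff_distrib)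
    have "\<bar>\<integral>x. (pmf \<mu> x - pmf \<nu> x) * f x \<partial>count_space UNIV\<bar> \<le> (\<integral>x. \<bar>(pmf \<mu> x - pmf \<nu> x) * f x\<bar> \<partial>count_space UNIV)"
      by (rule integral_abs_bound)
    also have "\<dots> \<le> (\<integral>x. \<bar>pmf \<mu> x - pmf \<nu> x\<bar> * B \<partial>count_space UNIV)"
      using integrable_abs[OF ih, unfolded abs_mult] id assms by (intro integral_mono) (auto simp: abs_mult mult_left_mono)
    finally show ?thesis .
  qed
  also have "\<dots> = B * (\<integral>x. \<bar>pmf \<mu> x - pmf \<nu> x\<bar> \<partial>count_space UNIV)"
    by (simp add: mult.commute)
  also have "(\<integral>x. \<bar>pmf \<mu> x - pmf \<nu> x\<bar> \<partial>count_space UNIV) = enn2real (L1 \<mu> \<nu>)"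
    unfolding L1_def by (subst integral_eq_nn_integral) auto
  finally show ?thesis .
qed


lemma L1_bind_same:
  fixes \<mu> :: "'a::countable pmf" and K K' :: "'a \<Rightarrow> 'b::countable pmf"
  shows "L1 (bind_pmf \<mu> K) (bind_pmf \<mu> K') \<le> (\<integral>\<^sup>+x. L1 (K x) (K' x) \<partial>measure_pmf \<mu>)"
proof -
  have pt: "ennreal \<bar>pmf (bind_pmf \<mu> K) y - pmf (bind_pmf \<mu> K') y\<bar>
      \<le> (\<integral>\<^sup>+x. ennreal \<bar>pmf (K x) y - pmf (K' x) y\<bar> \<partial>measure_pmf \<mu>)" for y
  proof -
    have i1: "integrable (measure_pmf \<mu>) (\<lambda>x. pmf (K x) y)"
      and i2: "integrable (measure_pmf \<mu>) (\<lambda>x. pmf (K' x) y)"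
      by (auto intro!: measure_pmf.integrable_const_bound[where B=1] simp: pmf_le_1)
    have id: "integrable (measure_pmf \<mu>) (\<lambda>x. \<bar>pmf (K x) y - pmf (K' x) y\<bar>)"
      using Bochner_Integration.integrable_diff[OF i1 i2] by (rule integrable_abs)
    have "\<bar>pmf (bind_pmf \<mu> K) y - pmf (bind_pmf \<mu> K') y\<bar>
        = \<bar>\<integral>x. pmf (K x) y - pmf (K' x) y \<partial>measure_pmf \<mu>\<bar>"
      unfolding pmf_bind by (simp add: Bochner_Integration.integral_diff[OF i1 i2])
    also have "\<dots> \<le> (\<integral>x. \<bar>pmf (K x) y - pmf (K' x) y\<bar> \<partial>measure_pmf \<mu>)"
      by (rule integral_abs_bound)
    finally have "ennreal \<bar>pmf (bind_pmf \<mu> K) y - pmf (bind_pmf \<mu> K') y\<bar>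
       \<le> ennreal (\<integral>x. \<bar>pmf (K x) y - pmf (K' x) y\<bar> \<partial>measure_pmf \<mu>)"
      by (rule ennreal_leI)
    also have "\<dots> = (\<integral>\<^sup>+x. ennreal \<bar>pmf (K x) y - pmf (K' x) y\<bar> \<partial>measure_pmf \<mu>)"
      using id by (subst nn_integral_eq_integral) auto
    finally show ?thesis .
  qed
  have "L1 (bind_pmf \<mu> K) (bind_pmf \<mu> K')
      \<le> (\<integral>\<^sup>+y. \<integral>\<^sup>+x. ennreal \<bar>pmf (K x) y - pmf (K' x) y\<bar> \<partial>measure_pmf \<mu> \<partial>count_space UNIV)"
    unfolding L1_def by (intro nn_integral_mono pt)
  also have "\<dots> = (\<integral>\<^sup>+x. L1 (K x) (K' x) \<partial>measure_pmf \<mu>)"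
    unfolding L1_def by (rule swap_pmf)
  finally show ?thesis .
qed

lemma L1_bind_diff:
  fixes \<mu> \<nu> :: "'a::countable pmf" and K :: "'a \<Rightarrow> 'b::countable pmf"
  shows "L1 (bind_pmf \<mu> K) (bind_pmf \<nu> K) \<le> L1 \<mu> \<nu>"
proof -
  have pt: "ennreal \<bar>pmf (bind_pmf \<mu> K) y - pmf (bind_pmf \<nu> K) y\<bar>
      \<le> (\<integral>\<^sup>+x. ennreal (\<bar>pmf \<mu> x - pmf \<nu> x\<bar> * pmf (K x) y) \<partial>count_space UNIV)" for y
  proof -
    have i1: "integrable (count_space UNIV) (\<lambda>x. pmf \<mu> x * pmf (K x) y)"
      and i2: "integrable (count_space UNIV) (\<lambda>x. pmf \<nu> x * pmf (K x) y)"
      by (auto intro!: integrable_pmf_mult[where B=1] simp: pmf_le_1)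
    have ih: "integrable (count_space UNIV) (\<lambda>x. (pmf \<mu> x - pmf \<nu> x) * pmf (K x) y)"
      using Bochner_Integration.integrable_diff[OF i1 i2] by (simp add: left_diff_distrib)
    have id: "integrable (count_space UNIV) (\<lambda>x. \<bar>pmf \<mu> x - pmf \<nu> x\<bar> * pmf (K x) y)"
      using integrable_abs[OF ih] by (simp add: abs_mult)
    have "\<bar>pmf (bind_pmf \<mu> K) y - pmf (bind_pmf \<nu> K) y\<bar>
        = \<bar>\<integral>x. (pmf \<mu> x - pmf \<nu> x) * pmf (K x) y \<partial>count_space UNIV\<bar>"
      unfolding pmf_bind_count
      by (simp add: Bochner_Integration.integral_diff[OF i1 i2, symmetric] left_diff_distrib)
    also have "\<dots> \<le> (\<integral>x. \<bar>(pmf \<mu> x - pmf \<nu> x) * pmf (K x) y\<bar> \<partial>count_space UNIV)"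
      by (rule integral_abs_bound)
    also have "\<dots> = (\<integral>x. \<bar>pmf \<mu> x - pmf \<nu> x\<bar> * pmf (K x) y \<partial>count_space UNIV)"
      by (simp add: abs_mult)
    finally have "ennreal \<bar>pmf (bind_pmf \<mu> K) y - pmf (bind_pmf \<nu> K) y\<bar>
       \<le> ennreal (\<integral>x. \<bar>pmf \<mu> x - pmf \<nu> x\<bar> * pmf (K x) y \<partial>count_space UNIV)"
      by (rule ennreal_leI)
    also have "\<dots> = (\<integral>\<^sup>+x. ennreal (\<bar>pmf \<mu> x - pmf \<nu> x\<bar> * pmf (K x) y) \<partial>count_space UNIV)"
      using id by (subst nn_integral_eq_integral) auto
    finally show ?thesis .
  qed
  have "L1 (bind_pmf \<mu> K) (bind_pmf \<nu> K)
      \<le> (\<integral>\<^sup>+y. \<integral>\<^sup>+x. ennreal (\<bar>pmf \<mu> x - pmf \<nu> x\<bar> * pmf (K x) y) \<partial>count_space UNIV \<partial>count_space UNIV)"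
    unfolding L1_def by (intro nn_integral_mono pt)
  also have "\<dots> = (\<integral>\<^sup>+x. \<integral>\<^sup>+y. ennreal \<bar>pmf \<mu> x - pmf \<nu> x\<bar> * ennreal (pmf (K x) y) \<partial>count_space UNIV \<partial>count_space UNIV)"
    by (subst swap_count) (simp add: ennreal_mult)
  also have "\<dots> = L1 \<mu> \<nu>"
    unfolding L1_def
    by (simp add: nn_integral_cmult nn_integral_pmf measure_pmf.emeasure_space_1[simplified])
  finally show ?thesis .
qed


definition D :: "'x pmf \<Rightarrow> 'x pmf \<Rightarrow> real" where "D \<mu> \<nu> = enn2real (L1 \<mu> \<nu>)"

lemma L1_lt: "L1 \<mu> \<nu> < top" using L1_fin by (simp add: less_top)

lemma L1_D: "L1 \<mu> \<nu> = ennreal (D \<mu> \<nu>)"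
  unfolding D_def by (rule ennreal_enn2real[symmetric, OF L1_lt])

lemma D_nonneg: "D \<mu> \<nu> \<ge> 0" unfolding D_def by simp

lemma D_le2: "D \<mu> \<nu> \<le> 2"
  unfolding D_def using enn2real_mono[OF L1_le2[of \<mu> \<nu>]] by simp

lemma D_sym: "D \<mu> \<nu> = D \<nu> \<mu>" unfolding D_def using L1_sym by metis

lemma D_tri: "D \<mu> \<rho> \<le> D \<mu> \<nu> + D \<nu> \<rho>"
proof -
  have "ennreal (D \<mu> \<rho>) \<le> ennreal (D \<mu> \<nu>) + ennreal (D \<nu> \<rho>)"
    using L1_tri[of \<mu> \<rho> \<nu>] by (simp add: L1_D)
  then show ?thesis by (metis D_nonneg add_nonneg_nonneg ennreal_le_iff ennreal_plus)
qed

lemma tv_D: "tv_dist (\<mu>::'x::countable pmf) \<nu> = D \<mu> \<nu> / 2"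
  unfolding tv_L1 D_def ..

lemma D_bind_diff:
  fixes \<mu> \<nu> :: "'a::countable pmf" and K :: "'a \<Rightarrow> 'b::countable pmf"
  shows "D (bind_pmf \<mu> K) (bind_pmf \<nu> K) \<le> D \<mu> \<nu>"
  using L1_bind_diff[of \<mu> K \<nu>] by (simp add: L1_D D_nonneg)

lemma D_bind_same:
  fixes \<mu> :: "'a::countable pmf" and K K' :: "'a \<Rightarrow> 'b::countable pmf"
  shows "D (bind_pmf \<mu> K) (bind_pmf \<mu> K') \<le> measure_pmf.expectation \<mu> (\<lambda>x. D (K x) (K' x))"
proof -
  have i: "integrable (measure_pmf \<mu>) (\<lambda>x. D (K x) (K' x))"
    by (rule measure_pmf.integrable_const_bound[where B=2]) (auto simp: D_nonneg D_le2)
  have "ennreal (D (bind_pmf \<mu> K) (bind_pmf \<mu> K')) \<le> (\<integral>\<^sup>+x. ennreal (D (K x) (K' x)) \<partial>measure_pmf \<mu>)"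
    using L1_bind_same[of \<mu> K K'] by (simp add: L1_D)
  also have "\<dots> = ennreal (measure_pmf.expectation \<mu> (\<lambda>x. D (K x) (K' x)))"
    using i by (subst nn_integral_eq_integral) (auto simp: D_nonneg)
  finally show ?thesis
    by (rule ennreal_le_iff[THEN iffD1, rotated]) (auto intro!: Bochner_Integration.integral_nonneg simp: D_nonneg)
qed

lemma D_bind_same_const:
  fixes \<mu> :: "'a::countable pmf" and K K' :: "'a \<Rightarrow> 'b::countable pmf"
  assumes "\<And>x. D (K x) (K' x) \<le> c"
  shows "D (bind_pmf \<mu> K) (bind_pmf \<mu> K') \<le> c"
proof -
  have "measure_pmf.expectation \<mu> (\<lambda>x. D (K x) (K' x)) \<le> measure_pmf.expectation \<mu> (\<lambda>x. c)"
    using assms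
    by (intro integral_mono measure_pmf.integrable_const_bound[where B=2]
          measure_pmf.integrable_const_bound[where B="\<bar>c\<bar>"])
       (auto simp: D_nonneg D_le2)
  then show ?thesis using D_bind_same[of \<mu> K K'] by simp
qed

lemma D_map: "D (map_pmf f (a::'a::countable pmf)) (map_pmf f b :: 'b::countable pmf) \<le> D a b"
  unfolding map_pmf_def by (rule D_bind_diff)

lemma step_sa: "step_dist \<pi> q \<mu> = bind_pmf (sa_dist \<pi> \<mu>) (\<lambda>(s, a). q s a)"
  by (simp add: step_dist_def sa_dist_def map_pmf_def bind_assoc_pmf bind_return_pmf)

lemma step_nonexp:
  fixes \<pi> :: "'s::countable \<Rightarrow> 'a::countable pmf"
  shows "D (step_dist \<pi> q \<mu>) (step_dist \<pi> q \<nu>) \<le> D \<mu> \<nu>"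
  unfolding step_dist_def by (rule D_bind_diff)

lemma sa_nonexp:
  fixes \<pi> :: "'s::countable \<Rightarrow> 'a::countable pmf"
  shows "D (sa_dist \<pi> \<mu>) (sa_dist \<pi> \<nu>) \<le> D \<mu> \<nu>"
  unfolding sa_dist_def by (rule D_bind_diff)

lemma step_pol:
  fixes \<pi>1 \<pi>2 :: "'s::countable \<Rightarrow> 'a::countable pmf"
  assumes "\<And>s. D (\<pi>1 s) (\<pi>2 s) \<le> c"
  shows "D (step_dist \<pi>1 q \<mu>) (step_dist \<pi>2 q \<mu>) \<le> c"
proof -
  have "D (step_dist \<pi>1 q \<mu>) (step_dist \<pi>2 q \<mu>) \<le> D (sa_dist \<pi>1 \<mu>) (sa_dist \<pi>2 \<mu>)"
    unfolding step_sa by (rule D_bind_diff)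
  also have "\<dots> \<le> c"
    unfolding sa_dist_def
    by (rule D_bind_same_const) (rule order.trans[OF D_map assms])
  finally show ?thesis .
qed

lemma step_dyn:
  fixes \<pi> :: "'s::countable \<Rightarrow> 'a::countable pmf"
  shows "D (step_dist \<pi> q \<mu>) (step_dist \<pi> q' \<mu>)
     \<le> measure_pmf.expectation (sa_dist \<pi> \<mu>) (\<lambda>(s, a). D (q s a) (q' s a))"
proof -
  have e: "(\<lambda>x. D ((\<lambda>(s, a). q s a) x) ((\<lambda>(s, a). q' s a) x)) = (\<lambda>(s, a). D (q s a) (q' s a))"
    by (auto simp: fun_eq_iff)
  show ?thesis
    unfolding step_sa using D_bind_same[of "sa_dist \<pi> \<mu>" "\<lambda>(s, a). q s a" "\<lambda>(s, a). q' s a"]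
    unfolding e .
qed

lemma telescope:
  fixes X Y :: "'x::countable pmf \<Rightarrow> 'x pmf"
  assumes X: "\<And>a b. D (X a) (X b) \<le> D a b"
    and Y: "\<And>j. j < n \<Longrightarrow> D (X ((Y ^^ j) d)) (Y ((Y ^^ j) d)) \<le> c"
  shows "D ((X ^^ n) d) ((Y ^^ n) d) \<le> real n * c"
  using Y
proof (induction n)
  case 0 then show ?case by (simp add: D_def L1_def)
next
  case (Suc n)
  have "D ((X ^^ Suc n) d) ((Y ^^ Suc n) d)
     \<le> D (X ((X ^^ n) d)) (X ((Y ^^ n) d)) + D (X ((Y ^^ n) d)) (Y ((Y ^^ n) d))"
    by (simp add: D_tri)
  also have "\<dots> \<le> real n * c + c"
    using X[of "(X ^^ n) d" "(Y ^^ n) d"] Suc.IH Suc.prems by force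
  finally show ?case by (simp add: algebra_simps)
qed

lemma iter_nonexp:
  fixes X :: "'x::countable pmf \<Rightarrow> 'x pmf"
  assumes X: "\<And>a b. D (X a) (X b) \<le> D a b"
  shows "D ((X ^^ n) a) ((X ^^ n) b) \<le> D a b"
  by (induction n) (auto intro: order.trans[OF X])


lemma exp_bound:
  fixes \<mu> :: "'a pmf" and f :: "'a \<Rightarrow> real"
  assumes "\<And>x. \<bar>f x\<bar> \<le> B"
  shows "\<bar>measure_pmf.expectation \<mu> f\<bar> \<le> B"
proof -
  have i: "integrable (measure_pmf \<mu>) f"
    using assms by (intro measure_pmf.integrable_const_bound[where B=B]) auto
  have "\<bar>measure_pmf.expectation \<mu> f\<bar> \<le> measure_pmf.expectation \<mu> (\<lambda>x. \<bar>f x\<bar>)"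
    by (rule integral_abs_bound)
  also have "\<dots> \<le> measure_pmf.expectation \<mu> (\<lambda>x. B)"
    using assms integrable_abs[OF i] by (intro integral_mono) auto
  finally show ?thesis by simp
qed

lemma shift_series:
  fixes \<gamma> :: real
  assumes "0 < \<gamma>" "\<gamma> < 1"
  shows "(\<lambda>t. \<gamma> ^ t * real (t - k)) sums (\<gamma> ^ Suc k / (1 - \<gamma>)^2)"
proof -
  have "(\<lambda>n. of_nat (Suc n) * \<gamma> ^ n) sums (1 / (1 - \<gamma>)^2)"
    using assms by (intro geometric_deriv_sums) auto
  then have "(\<lambda>n. \<gamma> ^ Suc k * (of_nat (Suc n) * \<gamma> ^ n)) sums (\<gamma> ^ Suc k * (1 / (1 - \<gamma>)^2))"
    by (rule sums_mult)
  moreover have "(\<lambda>n. \<gamma> ^ Suc k * (of_nat (Suc n) * \<gamma> ^ n)) = (\<lambda>i. \<gamma> ^ (i + Suc k) * real (i + Suc k - k))"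
    by (auto simp: fun_eq_iff power_add mult_ac)
  ultimately have "(\<lambda>i. \<gamma> ^ (i + Suc k) * real (i + Suc k - k)) sums (\<gamma> ^ Suc k / (1 - \<gamma>)^2)"
    by simp
  moreover have "(\<Sum>i<Suc k. \<gamma> ^ i * real (i - k)) = 0"
    by (intro sum.neutral) auto
  ultimately show ?thesis
    using sums_iff_shift[of "\<lambda>t. \<gamma> ^ t * real (t - k)" "Suc k"] by simp
qed


theorem theorem2:
  fixes \<rho>0 :: "'s::countable pmf"
    and p phat :: "'s \<Rightarrow> 'a::countable \<Rightarrow> 's pmf"
    and \<pi>D \<pi> :: "'s \<Rightarrow> 'a pmf"
    and r :: "'s \<Rightarrow> 'a \<Rightarrow> real"
    and \<gamma> rmax \<epsilon>m \<epsilon>\<pi> :: real and k :: nat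
  assumes "0 < \<gamma>" "\<gamma> < 1"
    and "\<forall>s a. \<bar>r s a\<bar> \<le> rmax"
    and "\<forall>t. measure_pmf.expectation (sa_dist \<pi>D (state_dist \<rho>0 \<pi>D p t))
               (\<lambda>(s, a). tv_dist (p s a) (phat s a)) \<le> \<epsilon>m"
    and "\<forall>s. tv_dist (\<pi>D s) (\<pi> s) \<le> \<epsilon>\<pi>"
  shows "ret \<rho>0 \<gamma> r \<pi> p \<ge> branched_ret \<rho>0 \<gamma> r k \<pi>D p \<pi> phat
           - 2 * rmax * (\<gamma> ^ (k + 1) * \<epsilon>\<pi> / (1 - \<gamma>)^2 + (\<gamma> ^ k + 2) * \<epsilon>\<pi> / (1 - \<gamma>)
                         + real k / (1 - \<gamma>) * (\<epsilon>m + 2 * \<epsilon>\<pi>))"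
proof -
  note g0 = assms(1) and g1 = assms(2) and rb = assms(3) and hm0 = assms(4) and hp0 = assms(5)
  define A where "A = step_dist \<pi> p"
  define B where "B = step_dist \<pi>D p"
  define C where "C = step_dist \<pi> phat"
  have rmax0: "0 \<le> rmax" using rb by (meson abs_ge_zero order.trans)
  have hp: "D (\<pi> s) (\<pi>D s) \<le> 2 * \<epsilon>\<pi>" for s
    using hp0 by (simp add: tv_D D_sym mult.commute)
  have ep0: "0 \<le> \<epsilon>\<pi>" using hp[of undefined] D_nonneg[of "\<pi> undefined" "\<pi>D undefined"] by linarith
  have hm: "measure_pmf.expectation (sa_dist \<pi>D ((B ^^ j) \<rho>0)) (\<lambda>(s, a). D (p s a) (phat s a)) \<le> 2 * \<epsilon>m" for j
  proof -
    have e: "(\<lambda>(s, a). tv_dist (p s a) (phat s a)) = (\<lambda>x. (\<lambda>(s, a). D (p s a) (phat s a)) x / 2)"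
      by (auto simp: fun_eq_iff tv_D)
    show ?thesis
      using hm0[rule_format, of j] unfolding e B_def state_dist_def by simp
  qed
  have em0: "0 \<le> \<epsilon>m"
  proof -
    have "0 \<le> measure_pmf.expectation (sa_dist \<pi>D ((B ^^ 0) \<rho>0)) (\<lambda>(s, a). D (p s a) (phat s a))"
      by (rule Bochner_Integration.integral_nonneg) (auto simp: D_nonneg split: prod.splits)
    then show ?thesis using hm[of 0] by linarith
  qed
  have AB: "D (A x) (B x) \<le> 2 * \<epsilon>\<pi>" for x
    unfolding A_def B_def by (rule step_pol) (rule hp)
  have CB: "D (C ((B ^^ j) \<rho>0)) (B ((B ^^ j) \<rho>0)) \<le> 2 * \<epsilon>m + 2 * \<epsilon>\<pi>" for j
  proof -
    let ?x = "(B ^^ j) \<rho>0"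
    have "D (C ?x) (B ?x) \<le> D (C ?x) (step_dist \<pi>D phat ?x) + D (step_dist \<pi>D phat ?x) (B ?x)"
      by (rule D_tri)
    moreover have "D (C ?x) (step_dist \<pi>D phat ?x) \<le> 2 * \<epsilon>\<pi>"
      unfolding C_def by (rule step_pol) (rule hp)
    moreover have "D (step_dist \<pi>D phat ?x) (B ?x) \<le> 2 * \<epsilon>m"
      using step_dyn[of \<pi>D p ?x phat] hm[of j] unfolding B_def by (simp add: D_sym)
    ultimately show ?thesis by linarith
  qed
  have Anx: "D (A a) (A b) \<le> D a b" for a b unfolding A_def by (rule step_nonexp)
  have Cnx: "D (C a) (C b) \<le> D a b" for a b unfolding C_def by (rule step_nonexp)
  have dist: "D (state_dist \<rho>0 \<pi> p t) (branch_state_dist \<rho>0 k \<pi>D p \<pi> phat t)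
      \<le> 2 * real (t - k) * \<epsilon>\<pi> + real k * (2 * \<epsilon>m + 4 * \<epsilon>\<pi>)" for t
  proof -
    define m where "m = t - k"
    define n where "n = t - m"
    define e where "e = (B ^^ m) \<rho>0"
    have tnm: "t = n + m" unfolding n_def m_def by simp
    have nk: "n \<le> k" unfolding n_def m_def by simp
    have st: "state_dist \<rho>0 \<pi> p t = (A ^^ n) ((A ^^ m) \<rho>0)"
      unfolding state_dist_def A_def tnm funpow_add by simp
    have br: "branch_state_dist \<rho>0 k \<pi>D p \<pi> phat t = (C ^^ n) e"
      unfolding branch_state_dist_def Let_def state_dist_def C_def e_def B_def m_def n_def ..
    have h1: "D ((A ^^ n) ((A ^^ m) \<rho>0)) ((A ^^ n) e) \<le> real m * (2 * \<epsilon>\<pi>)"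
      using iter_nonexp[OF Anx, of n "(A ^^ m) \<rho>0" e] telescope[OF Anx, of m B \<rho>0 "2 * \<epsilon>\<pi>"] AB
      unfolding e_def by force
    have h2: "D ((A ^^ n) e) ((B ^^ n) e) \<le> real n * (2 * \<epsilon>\<pi>)"
      using telescope[OF Anx, of n B e "2 * \<epsilon>\<pi>"] AB by force
    have h3: "D ((C ^^ n) e) ((B ^^ n) e) \<le> real n * (2 * \<epsilon>m + 2 * \<epsilon>\<pi>)"
    proof (rule telescope[OF Cnx])
      fix j assume "j < n"
      have "(B ^^ j) e = (B ^^ (j + m)) \<rho>0" unfolding e_def funpow_add by simp
      then show "D (C ((B ^^ j) e)) (B ((B ^^ j) e)) \<le> 2 * \<epsilon>m + 2 * \<epsilon>\<pi>"
        using CB[of "j + m"] by simp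
    qed
    have "D (state_dist \<rho>0 \<pi> p t) (branch_state_dist \<rho>0 k \<pi>D p \<pi> phat t)
       \<le> D ((A ^^ n) ((A ^^ m) \<rho>0)) ((A ^^ n) e) + D ((A ^^ n) e) ((B ^^ n) e) + D ((B ^^ n) e) ((C ^^ n) e)"
      unfolding st br by (meson D_tri add_mono order.trans order_refl)
    also have "\<dots> \<le> real m * (2 * \<epsilon>\<pi>) + real n * (2 * \<epsilon>\<pi>) + real n * (2 * \<epsilon>m + 2 * \<epsilon>\<pi>)"
      using h1 h2 h3 by (simp add: D_sym)
    also have "\<dots> = 2 * real m * \<epsilon>\<pi> + real n * (2 * \<epsilon>m + 4 * \<epsilon>\<pi>)"
      by (simp add: algebra_simps)
    also have "\<dots> \<le> 2 * real m * \<epsilon>\<pi> + real k * (2 * \<epsilon>m + 4 * \<epsilon>\<pi>)"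
      using nk em0 ep0 by (intro add_left_mono mult_right_mono) auto
    finally show ?thesis unfolding m_def .
  qed
  define R where "R = (\<lambda>(s, a). r s a)"
  have Rb: "\<bar>R x\<bar> \<le> rmax" for x unfolding R_def using rb by (auto split: prod.splits)
  define E1 where "E1 t = measure_pmf.expectation (sa_dist \<pi> (state_dist \<rho>0 \<pi> p t)) R" for t
  define E2 where "E2 t = measure_pmf.expectation (sa_dist \<pi> (branch_state_dist \<rho>0 k \<pi>D p \<pi> phat t)) R" for t
  define G where "G t = \<gamma> ^ t * (rmax * (2 * real (t - k) * \<epsilon>\<pi> + real k * (2 * \<epsilon>m + 4 * \<epsilon>\<pi>)))" for t
  have diff: "\<gamma> ^ t * E2 t - \<gamma> ^ t * E1 t \<le> G t" for t
  proof -
    have "\<bar>E1 t - E2 t\<bar> \<le> rmax * D (sa_dist \<pi> (state_dist \<rho>0 \<pi> p t)) (sa_dist \<pi> (branch_state_dist \<rho>0 k \<pi>D p \<pi> phat t))"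
      unfolding E1_def E2_def D_def by (rule L1_expect) (rule Rb)
    also have "\<dots> \<le> rmax * (2 * real (t - k) * \<epsilon>\<pi> + real k * (2 * \<epsilon>m + 4 * \<epsilon>\<pi>))"
      using rmax0 by (intro mult_left_mono order.trans[OF sa_nonexp dist])
    finally have "E2 t - E1 t \<le> rmax * (2 * real (t - k) * \<epsilon>\<pi> + real k * (2 * \<epsilon>m + 4 * \<epsilon>\<pi>))"
      by linarith
    then show ?thesis unfolding G_def using g0
      by (simp add: right_diff_distrib[symmetric] mult_left_mono)
  qed
  have geo: "summable (\<lambda>t. rmax * \<gamma> ^ t)"
    using g0 g1 by (intro summable_mult summable_geometric) auto
  have s1: "summable (\<lambda>t. \<gamma> ^ t * E1 t)"
    by (rule summable_comparison_test'[OF geo, of 0])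
       (use g0 exp_bound[OF Rb] in \<open>auto simp: E1_def abs_mult mult.commute intro!: mult_left_mono\<close>)
  have s2: "summable (\<lambda>t. \<gamma> ^ t * E2 t)"
    by (rule summable_comparison_test'[OF geo, of 0])
       (use g0 exp_bound[OF Rb] in \<open>auto simp: E2_def abs_mult mult.commute intro!: mult_left_mono\<close>)
  define S where "S = rmax * (2 * \<epsilon>\<pi>) * (\<gamma> ^ Suc k / (1 - \<gamma>)^2) + rmax * real k * (2 * \<epsilon>m + 4 * \<epsilon>\<pi>) * (1 / (1 - \<gamma>))"
  have Gs: "G sums S"
  proof -
    have a: "(\<lambda>t. rmax * (2 * \<epsilon>\<pi>) * (\<gamma> ^ t * real (t - k))) sums (rmax * (2 * \<epsilon>\<pi>) * (\<gamma> ^ Suc k / (1 - \<gamma>)^2))"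
      by (rule sums_mult[OF shift_series[OF g0 g1]])
    have b: "(\<lambda>t. rmax * real k * (2 * \<epsilon>m + 4 * \<epsilon>\<pi>) * \<gamma> ^ t) sums (rmax * real k * (2 * \<epsilon>m + 4 * \<epsilon>\<pi>) * (1 / (1 - \<gamma>)))"
      using g0 g1 by (intro sums_mult geometric_sums) auto
    have "G = (\<lambda>t. rmax * (2 * \<epsilon>\<pi>) * (\<gamma> ^ t * real (t - k)) + rmax * real k * (2 * \<epsilon>m + 4 * \<epsilon>\<pi>) * \<gamma> ^ t)"
      by (auto simp: fun_eq_iff G_def algebra_simps)
    then show ?thesis unfolding S_def using sums_add[OF a b] by simp
  qed
  have "branched_ret \<rho>0 \<gamma> r k \<pi>D p \<pi> phat - ret \<rho>0 \<gamma> r \<pi> p = (\<Sum>t. \<gamma> ^ t * E2 t - \<gamma> ^ t * E1 t)"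
    unfolding branched_ret_def ret_def E1_def E2_def R_def
    using suminf_diff[OF s2[unfolded E2_def R_def] s1[unfolded E1_def R_def]] by simp
  also have "\<dots> \<le> suminf G"
    using diff s1 s2 Gs by (intro suminf_le) (auto intro: summable_diff sums_summable)
  also have "\<dots> = S" using Gs by (simp add: sums_iff)
  also have "S \<le> 2 * rmax * (\<gamma> ^ (k + 1) * \<epsilon>\<pi> / (1 - \<gamma>)^2 + (\<gamma> ^ k + 2) * \<epsilon>\<pi> / (1 - \<gamma>)
                         + real k / (1 - \<gamma>) * (\<epsilon>m + 2 * \<epsilon>\<pi>))"
  proof -
    have "S = 2 * rmax * (\<gamma> ^ (k + 1) * \<epsilon>\<pi> / (1 - \<gamma>)^2 + real k / (1 - \<gamma>) * (\<epsilon>m + 2 * \<epsilon>\<pi>))"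
      unfolding S_def by (simp add: field_simps)
    moreover have "0 \<le> 2 * rmax * ((\<gamma> ^ k + 2) * \<epsilon>\<pi> / (1 - \<gamma>))"
      using rmax0 ep0 g0 g1 by (intro mult_nonneg_nonneg divide_nonneg_nonneg) auto
    ultimately show ?thesis by (simp add: algebra_simps)
  qed
  finally show ?thesis by linarith
qed

end
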